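(* For $m\ge1$ define $\gamma_m\in S_{3m+2}$ by $$\gamma_m=3m+2,\ P_1,\ P_2,\ \dots,\ P_m,\ 2m+2,$$ where $P_i=2i,\ 3m+2-i,\ 2i-1$ for $1\le i\le m-1$ and $P_m=2m,\ 2m+1,\ 2m-1$ (so $\gamma_1=52314$, $\gamma_2=82714536$). Then: (1) $\gamma_i$ is a pattern of $\gamma_{i+1}$ for every $i\ge1$; (2) $\gamma_i$ is qlg-$2$-sortable if and only if $i$ is even.
   Context: The $\mathfrak{D}^2\mathfrak{I}$ machine consists of two decreasing stacks $D_1,D_2$ followed in series by an increasing stack $I$. Elements of $D_1,D_2$ must be in decreasing order from top to bottom (top largest); elements of $I$ in increasing order from top to bottom (top smallest). Operations: $d_0$ pushes the next input element into $D_1$; $d_1$ moves the top of $D_1$ to $D_2$; $d_2$ moves the top of $D_2$ to $I$; $d_3$ pops the top of $I$ and appends it to the output. An operation is legal if it respects the stack restrictions; $d_3$ is legal if the popped element is the smallest among the elements not yet output, and also if no other operation is legal. The quasi left-greedy procedure performs at each step the first legal operation in the priority order $d_3\rhd d_1\rhd d_0\rhd d_2$. A permutation is qlg-$2$-sortable if this procedure outputs its elements in increasing order. *)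

theory Defs
  imports Main
begin

text \<open>Permutations are lists of distinct naturals (one-line notation).
  A state of the machine is (input, D1, D2, I, output); stacks are lists with
  the head being the top.\<close>

type_synonym dstate = "nat list \<times> nat list \<times> nat list \<times> nat list \<times> nat list"

text \<open>One step of the quasi left-greedy procedure, priority d3 > d1 > d0 > d2,
  where d3 is also legal (forced) when no other operation is legal.\<close>

fun qlg_step :: "dstate \<Rightarrow> dstate" where
  "qlg_step (inp, d1, d2, st, out) =
    (if st \<noteq> [] \<and> hd st = Min (set inp \<union> set d1 \<union> set d2 \<union> set st)
     then (inp, d1, d2, tl st, out @ [hd st])
     else if d1 \<noteq> [] \<and> (d2 = [] \<or> hd d1 > hd d2)
     then (inp, tl d1, hd d1 # d2, st, out)
     else if inp \<noteq> [] \<and> (d1 = [] \<or> hd inp > hd d1)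
     then (tl inp, hd inp # d1, d2, st, out)
     else if d2 \<noteq> [] \<and> (st = [] \<or> hd d2 < hd st)
     then (inp, d1, tl d2, hd d2 # st, out)
     else if st \<noteq> []
     then (inp, d1, d2, tl st, out @ [hd st])
     else (inp, d1, d2, st, out))"

text \<open>Every operation moves one element one stage forward, so the procedure
  performs exactly 4n operations on a permutation of length n.\<close>

definition qlg_output :: "nat list \<Rightarrow> nat list" where
  "qlg_output p = (case (qlg_step ^^ (4 * length p)) (p, [], [], [], []) of
                     (_, _, _, _, out) \<Rightarrow> out)"

definition qlg_2_sortable :: "nat list \<Rightarrow> bool" where
  "qlg_2_sortable p \<longleftrightarrow> qlg_output p = sort p"

definition is_pattern :: "nat list \<Rightarrow> nat list \<Rightarrow> bool" where
  "is_pattern p q \<longleftrightarrow> (\<exists>f :: nat \<Rightarrow> nat.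
      strict_mono_on {..<length p} f \<and> (\<forall>i<length p. f i < length q) \<and>
      (\<forall>i<length p. \<forall>j<length p. (p ! i < p ! j) \<longleftrightarrow> (q ! f i < q ! f j)))"

definition gammaP :: "nat \<Rightarrow> nat \<Rightarrow> nat list" where
  "gammaP m i = (if i < m then [2*i, 3*m+2-i, 2*i-1] else [2*m, 2*m+1, 2*m-1])"

definition gamma :: "nat \<Rightarrow> nat list" where
  "gamma m = [3*m+2] @ concat (map (gammaP m) [1..<m+1]) @ [2*m+2]"

lemma "gamma 1 = [5,2,3,1,4]" "gamma 2 = [8,2,7,1,4,5,3,6]"
  by (simp_all add: gamma_def gammaP_def upt_rec)

end

theory Submission imports Defs "HOL-Library.Multiset" begin

lemma qs_nil: "qlg_step (inp,d1,d2,[],out) =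
  (if d1 \<noteq> [] \<and> (d2 = [] \<or> hd d1 > hd d2) then (inp, tl d1, hd d1 # d2, [], out)
   else if inp \<noteq> [] \<and> (d1 = [] \<or> hd inp > hd d1) then (tl inp, hd inp # d1, d2, [], out)
   else if d2 \<noteq> [] then (inp, d1, tl d2, [hd d2], out) else (inp,d1,d2,[],out))"
  by simp

lemma qs_cons: "\<exists>y\<in>set inp \<union> set d1 \<union> set d2. y < s \<Longrightarrow> qlg_step (inp,d1,d2,s#st,out) =
  (if d1 \<noteq> [] \<and> (d2 = [] \<or> hd d1 > hd d2) then (inp, tl d1, hd d1 # d2, s#st, out)
   else if inp \<noteq> [] \<and> (d1 = [] \<or> hd inp > hd d1) then (tl inp, hd inp # d1, d2, s#st, out)
   else if d2 \<noteq> [] \<and> hd d2 < s then (inp, d1, tl d2, hd d2 # s # st, out) else (inp,d1,d2,st,out@[s]))"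
proof -
  assume "\<exists>y\<in>set inp \<union> set d1 \<union> set d2. y < s"
  then obtain y where y: "y \<in> set inp \<union> set d1 \<union> set d2" "y < s" by blast
  have "Min (set inp \<union> set d1 \<union> set d2 \<union> set (s#st)) \<le> y"
    using y by (intro Min_le) auto
  then have "s \<noteq> Min (set inp \<union> set d1 \<union> set d2 \<union> set (s#st))" using y(2) by linarith
  then show ?thesis by simp
qed

lemma reg:
  assumes "4*k+7 \<le> c" "D = [] \<or> hd D < 4*k+1"
  shows "(qlg_step^^12) ([4*k+1, 4*k+4, c+1, 4*k+3, 4*k+6, c, 4*k+5] @ r, D, (4*k+2)#E, (c+2)#S, out)
   = ((4*k+5) # r, (4*k+3)#(4*k+1)#D, (4*k+6)#(4*k+4)#(4*k+2)#E, c#(c+1)#(c+2)#S, out)"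
  using assms
  by (cases D) (auto simp del: qlg_step.simps simp add: qs_nil qs_cons numeral_eq_Suc)


lemma init:
  assumes "3 \<le> c"
  shows "(qlg_step^^8) ((c+1)#2#c#1#r, [], [], [], out) = (1#r, [], [2], [c, c+1], out)"
  using assms by (auto simp del: qlg_step.simps simp add: qs_nil qs_cons numeral_eq_Suc)

lemma odd_end:
  assumes "D = [] \<or> hd D < 4*k+1"
  shows "(qlg_step^^16) ([4*k+1, 4*k+4, 4*k+9, 4*k+3, 4*k+6, 4*k+7, 4*k+5, 4*k+8], D, (4*k+2)#E, (4*k+10)#S, out)
   = ([], (4*k+5)#(4*k+3)#(4*k+1)#D, (4*k+8)#(4*k+6)#(4*k+4)#(4*k+2)#E, (4*k+9)#(4*k+10)#S, out@[4*k+7])"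
  using assms
  by (cases D) (auto simp del: qlg_step.simps simp add: qs_nil qs_cons numeral_eq_Suc)

lemma even_end:
  assumes "D = [] \<or> hd D < 4*k+1"
  shows "(qlg_step^^11) ([4*k+1, 4*k+4, 4*k+5, 4*k+3, 4*k+6], D, (4*k+2)#E, (4*k+7)#S, out)
   = ([], (4*k+3)#(4*k+1)#D, (4*k+2)#E, (4*k+4)#(4*k+5)#(4*k+6)#(4*k+7)#S, out)"
  using assms
  by (cases D) (auto simp del: qlg_step.simps simp add: qs_nil qs_cons numeral_eq_Suc)

lemma unw1:
  "(qlg_step^^3) ([], (2*j+3)#(2*j+1)#D, (2*j+2)#E, (2*j+4)#S, out) = ([], (2*j+1)#D, E, (2*j+2)#(2*j+3)#(2*j+4)#S, out)"
  by (auto simp del: qlg_step.simps simp add: qs_nil qs_cons numeral_eq_Suc)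

lemma fin0:
  "(qlg_step^^2) ([], [1], [], 2#S, out) = ([], [], [], 1#2#S, out)"
  by (auto simp del: qlg_step.simps simp add: qs_nil qs_cons numeral_eq_Suc)

lemma qs_out: "a < b \<Longrightarrow> qlg_step ([],[],[],[a..<b], out) = ([],[],[],[Suc a..<b],out@[a])"
proof -
  assume "a < b"
  have "Min (set [] \<union> set [] \<union> set [] \<union> set [a..<b]) = a"
    using \<open>a < b\<close> by (intro Min_eqI) auto
  then show ?thesis using \<open>a < b\<close> by (simp add: upt_conv_Cons)
qed

lemma outp: "(qlg_step^^n) ([],[],[],[a..<a+n], out) = ([],[],[],[], out@[a..<a+n])"
proof (induction n arbitrary: a out)
  case 0 then show ?case by simp
next
  case (Suc n)
  have "(qlg_step^^Suc n) ([],[],[],[a..<a+Suc n], out) = (qlg_step^^n) ([],[],[],[Suc a..<Suc a+n],out@[a])"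
    by (simp add: funpow_Suc_right qs_out del: funpow.simps upt.simps)
  also have "\<dots> = ([],[],[],[], out@[a]@[Suc a..<Suc a+n])" using Suc.IH[of "Suc a" "out@[a]"] by (simp del: upt.simps)
  also have "out@[a]@[Suc a..<Suc a+n] = out@[a..<a+Suc n]" by (simp add: upt_conv_Cons)
  finally show ?case .
qed

lemma small1: "qlg_output [5,2,3,1,4] = [3,1,2,4,5]" by code_simp


definition dodd :: "nat \<Rightarrow> nat list" where "dodd j = rev (map (\<lambda>i. 2*i+1) [0..<j])"
definition deven :: "nat \<Rightarrow> nat list" where "deven j = rev (map (\<lambda>i. 2*i+2) [0..<j])"

lemma dodd_Suc: "dodd (Suc j) = (2*j+1) # dodd j" by (simp add: dodd_def)
lemma deven_Suc: "deven (Suc j) = (2*j+2) # deven j" by (simp add: deven_def)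
lemma dodd_0: "dodd 0 = []" by (simp add: dodd_def)
lemma deven_0: "deven 0 = []" by (simp add: deven_def)

lemma dodd_cond: "dodd (2*k) = [] \<or> hd (dodd (2*k)) < 4*k+1"
  by (cases k) (auto simp: dodd_0 dodd_Suc)

definition Rst :: "nat \<Rightarrow> nat \<Rightarrow> dstate" where
  "Rst m k = ((4*k+1) # concat (map (gammaP m) [2*k+2..<m+1]) @ [2*m+2], dodd (2*k), deven (2*k+1), [3*m+1-2*k..<3*m+3], [])"

lemma R_0: assumes "2 \<le> m" shows "(qlg_step^^8) (gamma m,[],[],[],[]) = Rst m 0"
proof -
  have g: "gamma m = ((3*m+1)+1)#2#(3*m+1)#1#(concat (map (gammaP m) [2..<m+1]) @ [2*m+2])"
    using assms by (simp add: gamma_def upt_conv_Cons gammaP_def numeral_eq_Suc)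
  show ?thesis unfolding g using init[of "3*m+1"] assms
    by (simp add: Rst_def dodd_0 deven_Suc deven_0 upt_conv_Cons numeral_2_eq_2 del: funpow.simps)
qed

lemma R_step: assumes "2*k+4 \<le> m" shows "(qlg_step^^12) (Rst m k) = Rst m (Suc k)"
proof -
  define c where "c = 3*m-1-2*k"
  have c: "4*k+7 \<le> c" using assms unfolding c_def by linarith
  have u: "[2*k+2..<m+1] = (2*k+2)#(2*k+3)#[2*k+4..<m+1]" using assms by (simp add: upt_conv_Cons numeral_eq_Suc)
  have p1: "gammaP m (2*k+2) = [4*k+4, c+1, 4*k+3]" using assms unfolding c_def gammaP_def by auto
  have p2: "gammaP m (2*k+3) = [4*k+6, c, 4*k+5]" using assms unfolding c_def gammaP_def by auto
  have e1: "3*m+1-2*k = c+2" "3*m+2-2*k = Suc (c+2)" "3*m+1-2*(Suc k) = c" using assms unfolding c_def by (simp_all add: algebra_simps)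
  have s1: "[3*m+1-2*k..<3*m+3] = (c+2)#[3*m+2-2*k..<3*m+3]" unfolding e1 using assms c_def
    by (intro upt_conv_Cons) linarith
  have s2: "[3*m+1-2*(Suc k)..<3*m+3] = c#(c+1)#(c+2)#[3*m+2-2*k..<3*m+3]" unfolding e1 using assms c_def
    by (simp add: upt_conv_Cons)
  have e: "deven (2*k+1) = (4*k+2) # deven (2*k)" by (simp add: deven_Suc)
  have Rk: "Rst m k = ([4*k+1, 4*k+4, c+1, 4*k+3, 4*k+6, c, 4*k+5] @ (concat (map (gammaP m) [2*k+4..<m+1]) @ [2*m+2]),
      dodd (2*k), (4*k+2) # deven (2*k), (c+2)#[3*m+2-2*k..<3*m+3], [])"
    unfolding Rst_def u list.map concat.simps p1 p2 s1 e by simp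
  have Rk1: "Rst m (Suc k) = ((4*k+5) # (concat (map (gammaP m) [2*k+4..<m+1]) @ [2*m+2]),
      (4*k+3)#(4*k+1)#dodd (2*k), (4*k+6)#(4*k+4)#(4*k+2)# deven (2*k), c#(c+1)#(c+2)#[3*m+2-2*k..<3*m+3], [])"
  proof -
    have e2: "2*Suc k + 2 = 2*k+4" "4*Suc k + 1 = 4*k+5" by simp_all
    show ?thesis unfolding Rst_def s2 e2 by (simp add: dodd_Suc deven_Suc)
  qed
  show ?thesis unfolding Rk Rk1 by (rule reg[OF c dodd_cond])
qed

lemma R_reach: "2*k+2 \<le> m \<Longrightarrow> (qlg_step^^(12*k+8)) (gamma m,[],[],[],[]) = Rst m k"
proof (induction k)
  case 0 then show ?case using R_0 by simp
next
  case (Suc k)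
  have "(qlg_step^^(12*Suc k+8)) (gamma m,[],[],[],[]) = (qlg_step^^12) ((qlg_step^^(12*k+8)) (gamma m,[],[],[],[]))"
  proof -
    have "12*Suc k + 8 = 12 + (12*k+8)" by simp
    then show ?thesis by (simp only: funpow_add comp_def)
  qed
  also have "\<dots> = Rst m (Suc k)" using Suc R_step by simp
  finally show ?case .
qed


lemma unwind: "2*j+2 < M \<Longrightarrow> (qlg_step^^(3*j)) ([], dodd (Suc j), deven j, [2*j+2..<M], out) = ([], [1], [], [2..<M], out)"
proof (induction j)
  case 0 then show ?case by (simp add: dodd_Suc dodd_0 deven_0 numeral_2_eq_2)
next
  case (Suc j)
  have st: "[2*Suc j+2..<M] = (2*j+4)#[Suc (2*j+4)..<M]" using Suc.prems by (simp add: upt_conv_Cons numeral_eq_Suc)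
  have st2: "(2*j+2)#(2*j+3)#(2*j+4)#[Suc (2*j+4)..<M] = [2*j+2..<M]" using Suc.prems by (simp add: upt_conv_Cons numeral_eq_Suc)
  have "(qlg_step^^(3*Suc j)) ([], dodd (Suc (Suc j)), deven (Suc j), [2*Suc j+2..<M], out)
     = (qlg_step^^(3*j)) ((qlg_step^^3) ([], (2*j+3)#(2*j+1)#dodd j, (2*j+2)#deven j, (2*j+4)#[Suc (2*j+4)..<M], out))"
  proof -
    have "3*Suc j = 3*j+3" by simp
    then show ?thesis unfolding st by (simp only: funpow_add comp_def dodd_Suc deven_Suc) (simp add: algebra_simps numeral_eq_Suc)
  qed
  also have "\<dots> = (qlg_step^^(3*j)) ([], dodd (Suc j), deven j, [2*j+2..<M], out)"
    unfolding unw1 st2 dodd_Suc ..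
  also have "\<dots> = ([], [1], [], [2..<M], out)" using Suc by simp
  finally show ?case .
qed

lemma mset_step: "(case qlg_step s of (a,b,c,d,e) \<Rightarrow> mset a + mset b + mset c + mset d + mset e) =
   (case s of (a,b,c,d,e) \<Rightarrow> mset a + mset b + mset c + mset d + mset e)"
proof -
  obtain a b c d e where s: "s = (a,b,c,d,e)" by (cases s) auto
  have h: "\<And>l. l \<noteq> [] \<Longrightarrow> mset l = add_mset (hd l) (mset (tl l))" by (case_tac l) auto
  show ?thesis unfolding s qlg_step.simps
    by (auto simp: h[of a] h[of b] h[of c] h[of d] split: if_splits)
qed

lemma mset_funpow: "(case (qlg_step^^n) s of (a,b,c,d,e) \<Rightarrow> mset a + mset b + mset c + mset d + mset e) =
   (case s of (a,b,c,d,e) \<Rightarrow> mset a + mset b + mset c + mset d + mset e)"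
proof (induction n)
  case 0 show ?case by simp
next
  case (Suc n) show ?case using mset_step[of "(qlg_step^^n) s"] Suc.IH by (simp only: funpow.simps comp_def)
qed

lemma out_step: "\<exists>zs. snd (snd (snd (snd (qlg_step s)))) = snd (snd (snd (snd s))) @ zs"
proof -
  obtain a b c d e where s: "s = (a,b,c,d,e)" by (cases s) auto
  show ?thesis unfolding s qlg_step.simps by (auto split: if_splits)
qed

lemma out_funpow: "\<exists>zs. snd (snd (snd (snd ((qlg_step^^n) s)))) = snd (snd (snd (snd s))) @ zs"
proof (induction n)
  case 0 then show ?case by simp
next
  case (Suc n)
  then obtain zs where "snd (snd (snd (snd ((qlg_step^^n) s)))) = snd (snd (snd (snd s))) @ zs" by blast
  moreover obtain ys where "snd (snd (snd (snd (qlg_step ((qlg_step^^n) s))))) = snd (snd (snd (snd ((qlg_step^^n) s)))) @ ys"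
    using out_step by blast
  ultimately show ?case by auto
qed

lemma qlg_output_alt: "qlg_output p = snd (snd (snd (snd ((qlg_step^^(4*length p)) (p,[],[],[],[])))))"
  unfolding qlg_output_def by (simp split: prod.split)

lemma len_concat: "length (concat (map (gammaP m) xs)) = 3 * length xs"
  by (induction xs) (auto simp: gammaP_def)

lemma len_gamma: "length (gamma m) = 3*m+2"
  by (simp add: gamma_def len_concat)


lemma even_run: "(qlg_step^^(4*length(gamma (2*k+2)))) (gamma (2*k+2),[],[],[],[]) = ([],[],[],[],[1..<6*k+9])"
proof -
  define m where "m = 2*k+2"
  have len: "4*length(gamma m) = (6*k+8)+(2+(3*(2*k+1)+(11+(12*k+8))))" unfolding m_def len_gamma by simp
  have R: "Rst m k = ([4*k+1,4*k+4,4*k+5,4*k+3,4*k+6], dodd(2*k), (4*k+2)#deven(2*k), (4*k+7)#[4*k+8..<6*k+9], [])"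
  proof -
    have u: "[2*k+2..<m+1] = [2*k+2]" unfolding m_def by simp
    have g: "gammaP m (2*k+2) = [4*k+4,4*k+5,4*k+3]" unfolding m_def gammaP_def by simp
    have st: "[3*m+1-2*k..<3*m+3] = (4*k+7)#[4*k+8..<6*k+9]" unfolding m_def by (simp add: upt_conv_Cons add.commute)
    show ?thesis unfolding Rst_def u list.map concat.simps g st by (simp add: m_def deven_Suc)
  qed
  have "(qlg_step^^(4*length(gamma m))) (gamma m,[],[],[],[]) =
     (qlg_step^^(6*k+8)) ((qlg_step^^2) ((qlg_step^^(3*(2*k+1))) ((qlg_step^^11) ((qlg_step^^(12*k+8)) (gamma m,[],[],[],[])))))"
    unfolding len by (simp only: funpow_add comp_def)
  also have "(qlg_step^^(12*k+8)) (gamma m,[],[],[],[]) = Rst m k" by (rule R_reach) (simp add: m_def)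
  also have "(qlg_step^^11) (Rst m k) = ([], (4*k+3)#(4*k+1)#dodd(2*k), (4*k+2)#deven(2*k), (4*k+4)#(4*k+5)#(4*k+6)#(4*k+7)#[4*k+8..<6*k+9], [])"
    unfolding R by (rule even_end[OF dodd_cond])
  also have "\<dots> = ([], dodd (Suc (2*k+1)), deven (2*k+1), [2*(2*k+1)+2..<6*k+9], [])"
    by (simp add: dodd_Suc deven_Suc upt_conv_Cons numeral_eq_Suc add.assoc)
  also have "(qlg_step^^(3*(2*k+1))) \<dots> = ([], [1], [], [2..<6*k+9], [])" by (rule unwind) simp
  also have "[2..<6*k+9] = 2 # [3..<6*k+9]" by (simp add: upt_conv_Cons)
  also have "(qlg_step^^2) ([], [1], [], 2 # [3..<6*k+9], []) = ([],[],[],1#2#[3..<6*k+9],[])" by (rule fin0)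
  also have "1#2#[3..<6*k+9] = [1..<1+(6*k+8)]"
  proof -
    have e: "1+(6*k+8) = 6*k+9" by simp
    have a: "[1..<6*k+9] = 1#[Suc 1..<6*k+9]" by (rule upt_conv_Cons) simp
    have b: "[2..<6*k+9] = 2#[Suc 2..<6*k+9]" by (rule upt_conv_Cons) simp
    show ?thesis unfolding e a using b by (simp add: numeral_2_eq_2 numeral_3_eq_3)
  qed
  also have "(qlg_step^^(6*k+8)) ([],[],[],[1..<1+(6*k+8)],[]) = ([],[],[],[],[]@[1..<1+(6*k+8)])" by (rule outp)
  finally show ?thesis by (simp add: m_def add.commute)
qed

lemma even_sortable: "qlg_2_sortable (gamma (2*k+2))"
proof -
  have o: "qlg_output (gamma (2*k+2)) = [1..<6*k+9]" unfolding qlg_output_alt even_run by simp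
  have "mset (gamma (2*k+2)) = mset [1..<6*k+9]"
    using mset_funpow[of "4*length(gamma (2*k+2))" "(gamma (2*k+2),[],[],[],[])"] unfolding even_run by simp
  then have "sort (gamma (2*k+2)) = [1..<6*k+9]" by (intro properties_for_sort) auto
  then show ?thesis unfolding qlg_2_sortable_def o by simp
qed


lemma odd_not_sortable: "\<not> qlg_2_sortable (gamma (2*k+3))"
proof -
  define m where "m = 2*k+3"
  have len: "4*length(gamma m) = (12*k+20)+(16+(12*k+8))" unfolding m_def len_gamma by simp
  have R: "Rst m k = ([4*k+1, 4*k+4, 4*k+9, 4*k+3, 4*k+6, 4*k+7, 4*k+5, 4*k+8], dodd(2*k), (4*k+2)#deven(2*k), (4*k+10)#[4*k+11..<6*k+12], [])"
  proof -
    have u: "[2*k+2..<m+1] = [2*k+2, 2*k+3]" unfolding m_def by (simp add: upt_conv_Cons)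
    have g1: "gammaP m (2*k+2) = [4*k+4,4*k+9,4*k+3]" unfolding m_def gammaP_def by simp
    have g2: "gammaP m (2*k+3) = [4*k+6,4*k+7,4*k+5]" unfolding m_def gammaP_def by simp
    have st: "[3*m+1-2*k..<3*m+3] = (4*k+10)#[4*k+11..<6*k+12]" unfolding m_def by (simp add: upt_conv_Cons add.commute)
    show ?thesis unfolding Rst_def u list.map concat.simps g1 g2 st by (simp add: m_def deven_Suc)
  qed
  have "(qlg_step^^(4*length(gamma m))) (gamma m,[],[],[],[]) =
     (qlg_step^^(12*k+20)) ((qlg_step^^16) ((qlg_step^^(12*k+8)) (gamma m,[],[],[],[])))"
    unfolding len by (simp only: funpow_add comp_def)
  also have "(qlg_step^^(12*k+8)) (gamma m,[],[],[],[]) = Rst m k" by (rule R_reach) (simp add: m_def)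
  also have "(qlg_step^^16) (Rst m k) = ([], (4*k+5)#(4*k+3)#(4*k+1)#dodd(2*k), (4*k+8)#(4*k+6)#(4*k+4)#(4*k+2)#deven(2*k), (4*k+9)#(4*k+10)#[4*k+11..<6*k+12], []@[4*k+7])"
    unfolding R by (rule odd_end[OF dodd_cond])
  finally have run: "(qlg_step^^(4*length(gamma m))) (gamma m,[],[],[],[]) = (qlg_step^^(12*k+20)) ([], (4*k+5)#(4*k+3)#(4*k+1)#dodd(2*k), (4*k+8)#(4*k+6)#(4*k+4)#(4*k+2)#deven(2*k), (4*k+9)#(4*k+10)#[4*k+11..<6*k+12], [4*k+7])"
    by simp
  obtain zs where o: "qlg_output (gamma m) = (4*k+7) # zs"
    using out_funpow[of "12*k+20" "([], (4*k+5)#(4*k+3)#(4*k+1)#dodd(2*k), (4*k+8)#(4*k+6)#(4*k+4)#(4*k+2)#deven(2*k), (4*k+9)#(4*k+10)#[4*k+11..<6*k+12], [4*k+7])"]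
    unfolding qlg_output_alt run by auto
  have one: "1 \<in> set (gamma m)" unfolding m_def gamma_def by (force simp: gammaP_def)
  show ?thesis
  proof
    assume "qlg_2_sortable (gamma (2*k+3))"
    then have "sort (gamma m) = (4*k+7) # zs" using o unfolding qlg_2_sortable_def m_def by simp
    moreover have "sorted (sort (gamma m))" by simp
    moreover have "1 \<in> set (sort (gamma m))" using one by simp
    ultimately show False by auto
  qed
qed


lemma pattern_gen:
  assumes "p \<noteq> []" "q = g (hd p) # [a,b,c] @ tl (map g p)" "strict_mono g"
  shows "is_pattern p q"
  unfolding is_pattern_def
proof (intro exI[of _ "\<lambda>i. if i = 0 then 0 else i + 3"] conjI allI impI)
  show "strict_mono_on {..<length p} (\<lambda>i. if i = 0 then 0 else i + 3)"
    by (auto simp: strict_mono_on_def)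
  have lq: "length q = length p + 3" using assms(1,2) by simp
  fix i assume i: "i < length p"
  show "(if i = 0 then 0 else i + 3) < length q" using i lq by simp
  have qi: "\<And>i. i < length p \<Longrightarrow> q ! (if i = 0 then 0 else i + 3) = g (p ! i)"
  proof -
    fix i assume i: "i < length p"
    show "q ! (if i = 0 then 0 else i + 3) = g (p ! i)"
    proof (cases i)
      case 0 then show ?thesis using assms(1,2) by (simp add: hd_conv_nth)
    next
      case (Suc j)
      have "q ! (i+3) = tl (map g p) ! j" using assms(2) Suc by simp
      also have "\<dots> = g (p ! i)" using i Suc by (simp add: nth_tl)
      finally show ?thesis using Suc by simp
    qed
  qed
  fix j assume j: "j < length p"
  show "(p ! i < p ! j) = (q ! (if i = 0 then 0 else i + 3) < q ! (if j = 0 then 0 else j + 3))"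
    unfolding qi[OF i] qi[OF j] using assms(3) by (simp add: strict_mono_less)
qed

lemma gamma_Suc:
  assumes "1 \<le> m"
  shows "gamma (Suc m) = (\<lambda>x. if 3*m+2 \<le> x then x+3 else x+2) (hd (gamma m)) # [2, 3*m+4, 1] @ tl (map (\<lambda>x. if 3*m+2 \<le> x then x+3 else x+2) (gamma m))"
proof -
  define g where "g = (\<lambda>x::nat. if 3*m+2 \<le> x then x+3 else x+2)"
  have pw: "\<And>i. i \<in> set [1..<m+1] \<Longrightarrow> map g (gammaP m i) = gammaP (Suc m) (Suc i)"
    using assms by (auto simp: g_def gammaP_def)
  have "map g (concat (map (gammaP m) [1..<m+1])) = concat (map (map g \<circ> gammaP m) [1..<m+1])"
    by (simp add: map_concat)
  also have "\<dots> = concat (map (\<lambda>i. gammaP (Suc m) (Suc i)) [1..<m+1])"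
    using pw by (metis (mono_tags, lifting) comp_apply map_eq_conv)
  also have "\<dots> = concat (map (gammaP (Suc m)) [2..<Suc m+1])"
  proof -
    have e: "[2..<Suc m+1] = map Suc [1..<m+1]" by (simp add: map_Suc_upt numeral_2_eq_2)
    show ?thesis by (simp only: e map_map comp_def)
  qed
  finally have c: "map g (concat (map (gammaP m) [1..<m+1])) = concat (map (gammaP (Suc m)) [2..<Suc m+1])" .
  have u: "[1..<Suc m+1] = 1 # [2..<Suc m+1]" by (simp add: upt_conv_Cons numeral_2_eq_2)
  have p1: "gammaP (Suc m) 1 = [2, 3*m+4, 1]" using assms by (simp add: gammaP_def)
  show ?thesis unfolding g_def[symmetric]
    unfolding gamma_def u list.map concat.simps p1 using c assms by (simp add: g_def)
qed

lemma pattern_part: "1 \<le> m \<Longrightarrow> is_pattern (gamma m) (gamma (Suc m))"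
  apply (rule pattern_gen[OF _ gamma_Suc])
    apply (simp add: gamma_def)
   apply assumption
  apply (auto simp: strict_mono_def)
  done

theorem mainTheorem14:
  shows "(\<forall>i\<ge>1. is_pattern (gamma i) (gamma (Suc i))) \<and>
         (\<forall>i\<ge>1. qlg_2_sortable (gamma i) \<longleftrightarrow> even i)"
proof (intro conjI allI impI)
  fix i :: nat assume "1 \<le> i" then show "is_pattern (gamma i) (gamma (Suc i))" by (rule pattern_part)
next
  fix i :: nat assume i: "1 \<le> i"
  show "qlg_2_sortable (gamma i) \<longleftrightarrow> even i"
  proof (cases "even i")
    case True
    have "i = 2*((i-2) div 2)+2" using True i by presburger
    then show ?thesis using even_sortable[of "(i-2) div 2"] True by simp
  next
    case False
    show ?thesis
    proof (cases "i = 1")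
      case True
      have g1: "gamma 1 = [5,2,3,1,4]" by (simp add: gamma_def gammaP_def)
      have "\<not> qlg_2_sortable (gamma 1)" unfolding qlg_2_sortable_def g1 small1
        by simp
      then show ?thesis using True by simp
    next
      case i1: False
      have "i = 2*((i-3) div 2)+3" using False i1 i by presburger
      then show ?thesis using odd_not_sortable[of "(i-3) div 2"] False by simp
    qed
  qed
qed

end
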